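(* Let $\gamma>0$, $b>0$, $u_{max}>0$, $i_0\in[0,1]$, and let $\beta$ be a bounded nonnegative (measurable) function of time. For a deadline $T>0$, consider the problem of minimizing $J(u)=-i(T)+\int_0^T b\,u^2(t)\,dt$ over Lebesgue integrable $u$ with $0\le u(t)\le u_{max}$, subject to $\dot i(t) = -\beta(t) i^2(t) + (\beta(t)-\gamma-u(t)) i(t) + u(t)$, $i(0)=i_0$, $0\le i(t)\le 1$. The optimality system (from Pontryagin's Maximum Principle) for this problem consists of the state equation above together with the adjoint equation $$\dot\lambda(t) = 2\beta(t)\, i(t)\,\lambda(t) - \big(\beta(t)-\gamma-u(t)\big)\lambda(t),\qquad \lambda(T)=1,$$ and the control characterization $$u(t)=\min\Big\{\max\Big\{\tfrac{\lambda(t)(1-i(t))}{2b},\,0\Big\},\,u_{max}\Big\}.$$ Then for a sufficiently small campaign deadline $T$, the state and adjoint trajectories $(i,\lambda)$ at the optimum (i.e. the solution of this optimality system) and the optimal control $u$ are unique.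
   Context: Controlled SIS information epidemic: $i(t)$ is the fraction of informed individuals, $\beta(t)$ the effective spreading rate, $\gamma$ the recovery rate, $u(t)$ the direct recruitment control, $\lambda(t)$ the adjoint variable. *)

theory Defs
  imports "HOL-Analysis.Analysis"
begin

text \<open>Optimality system (state eq., adjoint eq., control characterization) on [0,T],
  with the ODEs understood in the Caratheodory (integral) sense since beta is only measurable.\<close>
definition optimality_system ::
  "real \<Rightarrow> real \<Rightarrow> real \<Rightarrow> real \<Rightarrow> (real \<Rightarrow> real) \<Rightarrow> real \<Rightarrow>
   (real \<Rightarrow> real) \<Rightarrow> (real \<Rightarrow> real) \<Rightarrow> (real \<Rightarrow> real) \<Rightarrow> bool" where
  "optimality_system \<gamma> b umax i0 \<beta> T i lam u \<longleftrightarrow>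
     (\<forall>t\<in>{0..T}. u t = min (max (lam t * (1 - i t) / (2 * b)) 0) umax) \<and>
     (\<forall>t\<in>{0..T}. 0 \<le> i t \<and> i t \<le> 1) \<and>
     i 0 = i0 \<and> lam T = 1 \<and>
     (\<forall>t\<in>{0..T}. ((\<lambda>s. - \<beta> s * (i s)^2 + (\<beta> s - \<gamma> - u s) * i s + u s)
                      has_integral (i t - i0)) {0..t}) \<and>
     (\<forall>t\<in>{0..T}. ((\<lambda>s. 2 * \<beta> s * i s * lam s - (\<beta> s - \<gamma> - u s) * lam s)
                      has_integral (1 - lam t)) {t..T})"

end

theory Submission
  imports Defs
begin

lemma int_bound:
  fixes f :: "real \<Rightarrow> real"
  assumes "(f has_integral I) {a..b}" "a \<le> b" "0 \<le> B" "\<And>x. x \<in> {a..b} \<Longrightarrow> \<bar>f x\<bar> \<le> B"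
  shows "\<bar>I\<bar> \<le> B * (b - a)"
  using has_integral_bound[of B f I a b] assms by (simp add: content_real)

lemma cont_fwd:
  fixes f x :: "real \<Rightarrow> real"
  assumes "\<forall>t\<in>{0..T}. (f has_integral (x t - x0)) {0..t}" "0 \<le> T"
  shows "continuous_on {0..T} x"
proof -
  have "f integrable_on {0..T}" using assms by auto
  then have c: "continuous_on {0..T} (\<lambda>t. integral {0..t} f)" by (rule indefinite_integral_continuous_1)
  have "continuous_on {0..T} (\<lambda>t. x0 + integral {0..t} f)" by (intro continuous_intros c)
  moreover have "x0 + integral {0..t} f = x t" if "t \<in> {0..T}" for t
  proof -
    have "(f has_integral (x t - x0)) {0..t}" using assms(1) that by blast
    then have "integral {0..t} f = x t - x0" by (rule integral_unique)
    then show ?thesis by simp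
  qed
  ultimately show ?thesis using continuous_on_eq by blast
qed

lemma cont_bwd:
  fixes g y :: "real \<Rightarrow> real"
  assumes "\<forall>t\<in>{0..T}. (g has_integral (1 - y t)) {t..T}" "0 \<le> T"
  shows "continuous_on {0..T} y"
proof -
  have "g integrable_on {0..T}" using assms by auto
  then have c: "continuous_on {0..T} (\<lambda>t. integral {t..T} g)" by (rule indefinite_integral_continuous_1')
  have "continuous_on {0..T} (\<lambda>t. 1 - integral {t..T} g)" by (intro continuous_intros c)
  moreover have "1 - integral {t..T} g = y t" if "t \<in> {0..T}" for t
  proof -
    have "(g has_integral (1 - y t)) {t..T}" using assms(1) that by blast
    then have "integral {t..T} g = 1 - y t" by (rule integral_unique)
    then show ?thesis by simp
  qed
  ultimately show ?thesis using continuous_on_eq by blast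
qed

lemma has_max:
  fixes h :: "real \<Rightarrow> real"
  assumes "continuous_on {0..T} h" "0 \<le> T"
  shows "\<exists>t\<in>{0..T}. \<forall>s\<in>{0..T}. h s \<le> h t"
  using continuous_attains_sup[of "{0..T}" h] assms by auto

lemma clip_lip:
  fixes a c U :: real
  shows "\<bar>min (max a 0) U - min (max c 0) U\<bar> \<le> \<bar>a - c\<bar>"
  by (auto simp: min_def max_def)

lemma f_diff:
  fixes \<beta> M \<gamma> umax i1 i2 u1 u2 :: real
  assumes "0 \<le> \<beta>" "\<beta> \<le> M" "0 \<le> i1" "i1 \<le> 1" "0 \<le> i2" "i2 \<le> 1"
    "0 \<le> u1" "u1 \<le> umax" "0 \<le> u2" "u2 \<le> umax" "0 < \<gamma>"
  shows "\<bar>(- \<beta> * i1^2 + (\<beta> - \<gamma> - u1) * i1 + u1) - (- \<beta> * i2^2 + (\<beta> - \<gamma> - u2) * i2 + u2)\<bar>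
     \<le> (3*M + \<gamma> + umax) * \<bar>i1 - i2\<bar> + 2 * \<bar>u1 - u2\<bar>"
proof -
  have e: "(- \<beta> * i1^2 + (\<beta> - \<gamma> - u1) * i1 + u1) - (- \<beta> * i2^2 + (\<beta> - \<gamma> - u2) * i2 + u2)
    = - (\<beta>*(i1+i2))*(i1-i2) + (\<beta>-\<gamma>)*(i1-i2) - (u1-u2)*i1 - u2*(i1-i2) + (u1-u2)"
    by (simp add: algebra_simps power2_eq_square)
  have bb: "\<beta>*(i1+i2) \<le> \<beta>*2" using assms by (intro mult_left_mono) auto
  have a1: "\<bar>(\<beta>*(i1+i2))*(i1-i2)\<bar> \<le> (2*M)*\<bar>i1-i2\<bar>"
    unfolding abs_mult using assms bb by (intro mult_right_mono) auto
  have a2: "\<bar>(\<beta>-\<gamma>)*(i1-i2)\<bar> \<le> (M+\<gamma>)*\<bar>i1-i2\<bar>"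
    unfolding abs_mult using assms by (intro mult_right_mono) auto
  have a3: "\<bar>(u1-u2)*i1\<bar> \<le> \<bar>u1-u2\<bar>"
    unfolding abs_mult using assms by (simp add: mult_left_le)
  have a4: "\<bar>u2*(i1-i2)\<bar> \<le> umax*\<bar>i1-i2\<bar>"
    unfolding abs_mult using assms by (intro mult_right_mono) auto
  show ?thesis unfolding e using a1 a2 a3 a4 by (simp add: algebra_simps abs_if split: if_splits)
qed

lemma g_diff:
  fixes \<beta> M \<gamma> umax i1 i2 u1 u2 l1 l2 :: real
  assumes "0 \<le> \<beta>" "\<beta> \<le> M" "0 \<le> i1" "i1 \<le> 1" "0 \<le> i2" "i2 \<le> 1"
    "0 \<le> u1" "u1 \<le> umax" "0 \<le> u2" "u2 \<le> umax" "0 < \<gamma>" "\<bar>l2\<bar> \<le> 2"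
  shows "\<bar>(2 * \<beta> * i1 * l1 - (\<beta> - \<gamma> - u1) * l1) - (2 * \<beta> * i2 * l2 - (\<beta> - \<gamma> - u2) * l2)\<bar>
     \<le> (3*M + \<gamma> + umax) * \<bar>l1 - l2\<bar> + 4*M*\<bar>i1 - i2\<bar> + 2 * \<bar>u1 - u2\<bar>"
proof -
  have e: "(2 * \<beta> * i1 * l1 - (\<beta> - \<gamma> - u1) * l1) - (2 * \<beta> * i2 * l2 - (\<beta> - \<gamma> - u2) * l2)
    = (2*\<beta>*i1 - \<beta> + \<gamma> + u1)*(l1-l2) + (2*\<beta>*(i1-i2))*l2 + (u1-u2)*l2"
    by (simp add: algebra_simps)
  have "\<beta>*i1 \<le> \<beta>" using assms mult_left_le[of i1 \<beta>] by simp
  then have b: "2*\<beta>*i1 \<le> 2*M" using assms by simp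
  have b0: "0 \<le> 2*\<beta>*i1" using assms by simp
  have a1: "\<bar>(2*\<beta>*i1 - \<beta> + \<gamma> + u1)*(l1-l2)\<bar> \<le> (3*M + \<gamma> + umax)*\<bar>l1-l2\<bar>"
  proof -
    have "\<bar>2*\<beta>*i1 - \<beta> + \<gamma> + u1\<bar> \<le> 3*M + \<gamma> + umax"
      using b b0 assms(1,2,7,8,11) unfolding abs_le_iff by linarith
    then show ?thesis unfolding abs_mult by (intro mult_right_mono) auto
  qed
  have a2: "\<bar>(2*\<beta>*(i1-i2))*l2\<bar> \<le> (2*M*\<bar>i1-i2\<bar>)*2"
    unfolding abs_mult using assms by (intro mult_mono) (auto intro: mult_right_mono)
  have a3: "\<bar>(u1-u2)*l2\<bar> \<le> \<bar>u1-u2\<bar>*2"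
    unfolding abs_mult using assms by (intro mult_left_mono) auto
  show ?thesis unfolding e using a1 a2 a3 by (simp add: algebra_simps abs_if split: if_splits)
qed

lemma u_diff:
  fixes b umax i1 i2 l1 l2 :: real
  assumes "0 < b" "0 \<le> i1" "i1 \<le> 1" "\<bar>l2\<bar> \<le> 2"
  shows "\<bar>min (max (l1 * (1 - i1) / (2 * b)) 0) umax - min (max (l2 * (1 - i2) / (2 * b)) 0) umax\<bar>
     \<le> (\<bar>l1 - l2\<bar> + 2 * \<bar>i1 - i2\<bar>) / (2*b)"
proof -
  have "\<bar>l1 * (1 - i1) - l2 * (1 - i2)\<bar> \<le> \<bar>l1 - l2\<bar> + 2 * \<bar>i1 - i2\<bar>"
  proof -
    have e: "l1 * (1 - i1) - l2 * (1 - i2) = (l1-l2)*(1-i1) - l2*(i1-i2)" by (simp add: algebra_simps)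
    have "\<bar>(l1-l2)*(1-i1)\<bar> \<le> \<bar>l1-l2\<bar>" unfolding abs_mult using assms by (simp add: mult_left_le)
    moreover have "\<bar>l2*(i1-i2)\<bar> \<le> 2*\<bar>i1-i2\<bar>" unfolding abs_mult using assms by (intro mult_right_mono) auto
    ultimately show ?thesis unfolding e by linarith
  qed
  moreover have "l1 * (1 - i1) / (2 * b) - l2 * (1 - i2) / (2 * b) = (l1 * (1 - i1) - l2 * (1 - i2)) / (2*b)"
    by (simp add: diff_divide_distrib)
  ultimately have "\<bar>l1 * (1 - i1) / (2 * b) - l2 * (1 - i2) / (2 * b)\<bar> \<le> (\<bar>l1 - l2\<bar> + 2 * \<bar>i1 - i2\<bar>) / (2*b)"
    using assms by (simp add: abs_div divide_right_mono)
  then show ?thesis using clip_lip order_trans by blast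
qed

lemma coef_bound:
  fixes \<beta> M \<gamma> umax i u :: real
  assumes "0 \<le> \<beta>" "\<beta> \<le> M" "0 \<le> i" "i \<le> 1" "0 \<le> u" "u \<le> umax" "0 < \<gamma>"
  shows "\<bar>2*\<beta>*i - \<beta> + \<gamma> + u\<bar> \<le> 3*M + \<gamma> + umax"
proof -
  have "\<beta>*i \<le> \<beta>" using assms mult_left_le[of i \<beta>] by simp
  then have b: "2*\<beta>*i \<le> 2*M" using assms by simp
  have b0: "0 \<le> 2*\<beta>*i" using assms by simp
  show ?thesis using b b0 assms unfolding abs_le_iff by linarith
qed

lemma u_range:
  fixes x umax :: real
  assumes "0 < umax"
  shows "0 \<le> min (max x 0) umax \<and> min (max x 0) umax \<le> umax"
  using assms by (auto simp: min_def max_def)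

lemma lam_bound:
  fixes \<gamma> b umax i0 M T :: real and \<beta> :: "real \<Rightarrow> real"
  assumes "\<gamma> > 0" "umax > 0"
    and "\<And>t. 0 \<le> \<beta> t" and "\<And>t. \<beta> t \<le> M"
    and "0 < T" and cT: "(3*M + \<gamma> + umax) * T \<le> 1/2"
    and S: "optimality_system \<gamma> b umax i0 \<beta> T i lam u"
  shows "\<forall>t\<in>{0..T}. \<bar>lam t\<bar> \<le> 2"
proof -
  define c where "c = 3*M + \<gamma> + umax"
  have M0: "0 \<le> M" using assms(3,4) order_trans by blast
  have c0: "0 \<le> c" unfolding c_def using M0 assms by simp
  have uS: "\<forall>t\<in>{0..T}. u t = min (max (lam t * (1 - i t) / (2 * b)) 0) umax"
   and iS: "\<forall>t\<in>{0..T}. 0 \<le> i t \<and> i t \<le> 1"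
   and gS: "\<forall>t\<in>{0..T}. ((\<lambda>s. 2 * \<beta> s * i s * lam s - (\<beta> s - \<gamma> - u s) * lam s)
                      has_integral (1 - lam t)) {t..T}"
    using S unfolding optimality_system_def by auto
  have ur: "0 \<le> u t \<and> u t \<le> umax" if "t \<in> {0..T}" for t
    using uS that u_range[OF assms(2)] by metis
  have "continuous_on {0..T} lam" using cont_bwd[OF gS] assms(5) by simp
  then have "continuous_on {0..T} (\<lambda>t. \<bar>lam t\<bar>)" by (intro continuous_intros)
  then obtain t0 where t0: "t0 \<in> {0..T}" and mx: "\<forall>s\<in>{0..T}. \<bar>lam s\<bar> \<le> \<bar>lam t0\<bar>"
    using has_max[of T "\<lambda>t. \<bar>lam t\<bar>"] assms(5) by auto
  define L where "L = \<bar>lam t0\<bar>"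
  have L0: "0 \<le> L" unfolding L_def by simp
  have pw: "\<bar>2 * \<beta> s * i s * lam s - (\<beta> s - \<gamma> - u s) * lam s\<bar> \<le> c * L" if "s \<in> {t0..T}" for s
  proof -
    have s: "s \<in> {0..T}" using that t0 by auto
    have e: "2 * \<beta> s * i s * lam s - (\<beta> s - \<gamma> - u s) * lam s = (2*\<beta> s*i s - \<beta> s + \<gamma> + u s) * lam s"
      by (simp add: algebra_simps)
    have "\<bar>2*\<beta> s*i s - \<beta> s + \<gamma> + u s\<bar> \<le> c"
      unfolding c_def using coef_bound[of "\<beta> s" M "i s" "u s" umax \<gamma>] assms iS ur s by auto
    moreover have "\<bar>lam s\<bar> \<le> L" using mx s L_def by auto
    ultimately show ?thesis unfolding e abs_mult using c0 by (intro mult_mono) auto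
  qed
  have "\<bar>1 - lam t0\<bar> \<le> c * L * (T - t0)"
    using int_bound[OF gS[rule_format, OF t0] _ _ pw] t0 c0 L0 by auto
  also have "\<dots> \<le> c * L * T" using t0 c0 L0 by (intro mult_left_mono) auto
  also have "\<dots> = (c*T) * L" by simp
  also have "\<dots> \<le> (1/2) * L" using cT L0 unfolding c_def by (intro mult_right_mono) auto
  finally have "L \<le> 2" unfolding L_def by linarith
  then show ?thesis using mx L_def by fastforce
qed

lemma lin_aux: fixes x y D :: real shows "x + y \<le> D \<Longrightarrow> x \<le> D \<Longrightarrow> y + 2 * x \<le> 2 * D" by linarith

lemma core:
  fixes \<gamma> b umax i0 M T :: real and \<beta> :: "real \<Rightarrow> real"
  assumes g0: "\<gamma> > 0" and b0: "b > 0" and um: "umax > 0"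
    and bt: "\<And>t. 0 \<le> \<beta> t" "\<And>t. \<beta> t \<le> M"
    and T0: "0 < T" and KT: "(2*(3*M + \<gamma> + umax) + 4*M + 4/b) * T \<le> 1/2"
    and S1: "optimality_system \<gamma> b umax i0 \<beta> T i1 lam1 u1"
    and S2: "optimality_system \<gamma> b umax i0 \<beta> T i2 lam2 u2"
  shows "\<forall>t\<in>{0..T}. i1 t = i2 t \<and> lam1 t = lam2 t \<and> u1 t = u2 t"
proof -
  define c where "c = 3*M + \<gamma> + umax"
  define K where "K = 2*c + 4*M + 4/b"
  have M0: "0 \<le> M" using bt order_trans by blast
  have c0: "0 \<le> c" unfolding c_def using M0 g0 um by simp
  have ib: "0 \<le> 4/b" using b0 by simp
  have KT': "K * T \<le> 1/2" using KT unfolding K_def c_def .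
  have cT: "c * T \<le> 1/2"
  proof -
    have "c*T \<le> K*T" unfolding K_def using T0 M0 ib c0 by (intro mult_right_mono) auto
    then show ?thesis using KT' by linarith
  qed
  have lb: "\<forall>t\<in>{0..T}. \<bar>lam2 t\<bar> \<le> 2"
    using lam_bound[OF g0 um bt T0 _ S2] cT unfolding c_def by blast
  have uS1: "\<forall>t\<in>{0..T}. u1 t = min (max (lam1 t * (1 - i1 t) / (2 * b)) 0) umax"
   and iS1: "\<forall>t\<in>{0..T}. 0 \<le> i1 t \<and> i1 t \<le> 1"
   and fS1: "\<forall>t\<in>{0..T}. ((\<lambda>s. - \<beta> s * (i1 s)^2 + (\<beta> s - \<gamma> - u1 s) * i1 s + u1 s)
                      has_integral (i1 t - i0)) {0..t}"
   and gS1: "\<forall>t\<in>{0..T}. ((\<lambda>s. 2 * \<beta> s * i1 s * lam1 s - (\<beta> s - \<gamma> - u1 s) * lam1 s)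
                      has_integral (1 - lam1 t)) {t..T}"
    using S1 unfolding optimality_system_def by auto
  have uS2: "\<forall>t\<in>{0..T}. u2 t = min (max (lam2 t * (1 - i2 t) / (2 * b)) 0) umax"
   and iS2: "\<forall>t\<in>{0..T}. 0 \<le> i2 t \<and> i2 t \<le> 1"
   and fS2: "\<forall>t\<in>{0..T}. ((\<lambda>s. - \<beta> s * (i2 s)^2 + (\<beta> s - \<gamma> - u2 s) * i2 s + u2 s)
                      has_integral (i2 t - i0)) {0..t}"
   and gS2: "\<forall>t\<in>{0..T}. ((\<lambda>s. 2 * \<beta> s * i2 s * lam2 s - (\<beta> s - \<gamma> - u2 s) * lam2 s)
                      has_integral (1 - lam2 t)) {t..T}"
    using S2 unfolding optimality_system_def by auto
  have ur1: "0 \<le> u1 t \<and> u1 t \<le> umax" if "t \<in> {0..T}" for t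
    using uS1 that u_range[OF um] by metis
  have ur2: "0 \<le> u2 t \<and> u2 t \<le> umax" if "t \<in> {0..T}" for t
    using uS2 that u_range[OF um] by metis
  have T0': "0 \<le> T" using T0 by simp
  have "continuous_on {0..T} i1" using cont_fwd[OF fS1 T0'] .
  moreover have "continuous_on {0..T} i2" using cont_fwd[OF fS2 T0'] .
  moreover have "continuous_on {0..T} lam1" using cont_bwd[OF gS1 T0'] .
  moreover have "continuous_on {0..T} lam2" using cont_bwd[OF gS2 T0'] .
  ultimately have "continuous_on {0..T} (\<lambda>t. \<bar>i1 t - i2 t\<bar> + \<bar>lam1 t - lam2 t\<bar>)"
    by (intro continuous_intros)
  then obtain t0 where t0: "t0 \<in> {0..T}"
    and mx: "\<forall>s\<in>{0..T}. \<bar>i1 s - i2 s\<bar> + \<bar>lam1 s - lam2 s\<bar> \<le> \<bar>i1 t0 - i2 t0\<bar> + \<bar>lam1 t0 - lam2 t0\<bar>"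
    using has_max T0' by blast
  define D where "D = \<bar>i1 t0 - i2 t0\<bar> + \<bar>lam1 t0 - lam2 t0\<bar>"
  have D0: "0 \<le> D" unfolding D_def by simp
  have dIL: "\<bar>i1 s - i2 s\<bar> + \<bar>lam1 s - lam2 s\<bar> \<le> D" if "s \<in> {0..T}" for s
    using mx that unfolding D_def by blast
  have dI: "\<bar>i1 s - i2 s\<bar> \<le> D" if "s \<in> {0..T}" for s
    using dIL[OF that] by linarith
  have dL: "\<bar>lam1 s - lam2 s\<bar> \<le> D" if "s \<in> {0..T}" for s
    using dIL[OF that] by linarith
  have dU: "\<bar>u1 s - u2 s\<bar> \<le> D / b" if s: "s \<in> {0..T}" for s
  proof -
    have e1: "u1 s = min (max (lam1 s * (1 - i1 s) / (2 * b)) 0) umax" using uS1 s by blast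
    have e2: "u2 s = min (max (lam2 s * (1 - i2 s) / (2 * b)) 0) umax" using uS2 s by blast
    have i1s: "0 \<le> i1 s" "i1 s \<le> 1" using iS1 s by auto
    have l2s: "\<bar>lam2 s\<bar> \<le> 2" using lb s by blast
    have "\<bar>u1 s - u2 s\<bar> \<le> (\<bar>lam1 s - lam2 s\<bar> + 2 * \<bar>i1 s - i2 s\<bar>) / (2*b)"
      unfolding e1 e2 by (rule u_diff[OF b0 i1s l2s])
    also have "\<dots> \<le> (2*D) / (2*b)"
    proof (rule divide_right_mono)
      have "\<bar>i1 s - i2 s\<bar> + \<bar>lam1 s - lam2 s\<bar> \<le> D" using mx s unfolding D_def by blast
      then show "\<bar>lam1 s - lam2 s\<bar> + 2 * \<bar>i1 s - i2 s\<bar> \<le> 2 * D" using dI[OF s] by (rule lin_aux)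
      show "0 \<le> 2*b" using b0 by simp
    qed
    finally show ?thesis using b0 by simp
  qed
  define B1 where "B1 = c*D + 2*(D/b)"
  define B2 where "B2 = c*D + 4*M*D + 2*(D/b)"
  have B10: "0 \<le> B1" unfolding B1_def using c0 D0 b0 by simp
  have B20: "0 \<le> B2" unfolding B2_def using c0 D0 b0 M0 by simp
  have bnd: "\<bar>i1 t - i2 t\<bar> + \<bar>lam1 t - lam2 t\<bar> \<le> K * D * T" if t: "t \<in> {0..T}" for t
  proof -
    have pf: "\<bar>(- \<beta> s * (i1 s)^2 + (\<beta> s - \<gamma> - u1 s) * i1 s + u1 s) -
               (- \<beta> s * (i2 s)^2 + (\<beta> s - \<gamma> - u2 s) * i2 s + u2 s)\<bar> \<le> B1" if "s \<in> {0..t}" for s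
    proof -
      have s: "s \<in> {0..T}" using that t by auto
      have i1s: "0 \<le> i1 s \<and> i1 s \<le> 1" using iS1 s by blast
      have i2s: "0 \<le> i2 s \<and> i2 s \<le> 1" using iS2 s by blast
      have u1s: "0 \<le> u1 s \<and> u1 s \<le> umax" using ur1[OF s] .
      have u2s: "0 \<le> u2 s \<and> u2 s \<le> umax" using ur2[OF s] .
      have bs1: "0 \<le> \<beta> s" and bs2: "\<beta> s \<le> M" using bt by auto
      have "\<bar>(- \<beta> s * (i1 s)^2 + (\<beta> s - \<gamma> - u1 s) * i1 s + u1 s) -
               (- \<beta> s * (i2 s)^2 + (\<beta> s - \<gamma> - u2 s) * i2 s + u2 s)\<bar>
            \<le> c * \<bar>i1 s - i2 s\<bar> + 2 * \<bar>u1 s - u2 s\<bar>"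
        unfolding c_def by (rule f_diff[OF bs1 bs2 conjunct1[OF i1s] conjunct2[OF i1s] conjunct1[OF i2s] conjunct2[OF i2s] conjunct1[OF u1s] conjunct2[OF u1s] conjunct1[OF u2s] conjunct2[OF u2s] g0])
      also have "\<dots> \<le> B1" unfolding B1_def
        using dI[OF s] dU[OF s] c0 by (intro add_mono mult_left_mono) auto
      finally show ?thesis .
    qed
    have hf: "((\<lambda>s. (- \<beta> s * (i1 s)^2 + (\<beta> s - \<gamma> - u1 s) * i1 s + u1 s) -
               (- \<beta> s * (i2 s)^2 + (\<beta> s - \<gamma> - u2 s) * i2 s + u2 s)) has_integral (i1 t - i2 t)) {0..t}"
      using has_integral_diff[OF fS1[rule_format, OF t] fS2[rule_format, OF t]] by simp
    have e1: "\<bar>i1 t - i2 t\<bar> \<le> B1 * T"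
    proof -
      have "\<bar>i1 t - i2 t\<bar> \<le> B1 * (t - 0)" using int_bound[OF hf _ B10 pf] t by auto
      also have "\<dots> \<le> B1 * T" using t B10 by (intro mult_left_mono) auto
      finally show ?thesis .
    qed
    have pg: "\<bar>(2 * \<beta> s * i1 s * lam1 s - (\<beta> s - \<gamma> - u1 s) * lam1 s) -
               (2 * \<beta> s * i2 s * lam2 s - (\<beta> s - \<gamma> - u2 s) * lam2 s)\<bar> \<le> B2" if "s \<in> {t..T}" for s
    proof -
      have s: "s \<in> {0..T}" using that t by auto
      have i1s: "0 \<le> i1 s \<and> i1 s \<le> 1" using iS1 s by blast
      have i2s: "0 \<le> i2 s \<and> i2 s \<le> 1" using iS2 s by blast
      have u1s: "0 \<le> u1 s \<and> u1 s \<le> umax" using ur1[OF s] .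
      have u2s: "0 \<le> u2 s \<and> u2 s \<le> umax" using ur2[OF s] .
      have bs1: "0 \<le> \<beta> s" and bs2: "\<beta> s \<le> M" using bt by auto
      have l2s: "\<bar>lam2 s\<bar> \<le> 2" using lb s by blast
      have "\<bar>(2 * \<beta> s * i1 s * lam1 s - (\<beta> s - \<gamma> - u1 s) * lam1 s) -
               (2 * \<beta> s * i2 s * lam2 s - (\<beta> s - \<gamma> - u2 s) * lam2 s)\<bar>
            \<le> c * \<bar>lam1 s - lam2 s\<bar> + 4*M*\<bar>i1 s - i2 s\<bar> + 2 * \<bar>u1 s - u2 s\<bar>"
        unfolding c_def by (rule g_diff[OF bs1 bs2 conjunct1[OF i1s] conjunct2[OF i1s] conjunct1[OF i2s] conjunct2[OF i2s] conjunct1[OF u1s] conjunct2[OF u1s] conjunct1[OF u2s] conjunct2[OF u2s] g0 l2s])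
      also have "\<dots> \<le> B2" unfolding B2_def
        using dI[OF s] dU[OF s] dL[OF s] c0 M0 by (intro add_mono mult_left_mono) auto
      finally show ?thesis .
    qed
    have hg: "((\<lambda>s. (2 * \<beta> s * i1 s * lam1 s - (\<beta> s - \<gamma> - u1 s) * lam1 s) -
               (2 * \<beta> s * i2 s * lam2 s - (\<beta> s - \<gamma> - u2 s) * lam2 s)) has_integral ((1 - lam1 t) - (1 - lam2 t))) {t..T}"
      using has_integral_diff[OF gS1[rule_format, OF t] gS2[rule_format, OF t]] by simp
    have e2: "\<bar>lam1 t - lam2 t\<bar> \<le> B2 * T"
    proof -
      have "\<bar>(1 - lam1 t) - (1 - lam2 t)\<bar> \<le> B2 * (T - t)" using int_bound[OF hg _ B20 pg] t by auto
      also have "\<dots> \<le> B2 * T" using t B20 by (intro mult_left_mono) auto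
      finally show ?thesis by (simp add: abs_minus_commute)
    qed
    have "B1 + B2 = K * D" unfolding B1_def B2_def K_def by (simp add: algebra_simps)
    have "\<bar>i1 t - i2 t\<bar> + \<bar>lam1 t - lam2 t\<bar> \<le> B1 * T + B2 * T" using e1 e2 by linarith
    also have "\<dots> = (B1 + B2) * T" by (simp add: algebra_simps)
    finally show ?thesis using \<open>B1 + B2 = K * D\<close> by simp
  qed
  have "D \<le> K * D * T" using bnd[OF t0] unfolding D_def .
  also have "\<dots> = (K*T) * D" by simp
  also have "\<dots> \<le> (1/2) * D" using KT' D0 by (intro mult_right_mono) auto
  finally have Dz: "D = 0" using D0 by linarith
  show ?thesis
  proof
    fix t assume t: "t \<in> {0..T}"
    have "i1 t = i2 t" "lam1 t = lam2 t" using dI[OF t] dL[OF t] Dz by auto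
    moreover then have "u1 t = u2 t" using uS1 uS2 t by simp
    ultimately show "i1 t = i2 t \<and> lam1 t = lam2 t \<and> u1 t = u2 t" by simp
  qed
qed

theorem theorem2:
  fixes \<gamma> b umax i0 M :: real and \<beta> :: "real \<Rightarrow> real"
  assumes "\<gamma> > 0" "b > 0" "umax > 0" "0 \<le> i0" "i0 \<le> 1"
    and "\<beta> \<in> borel_measurable borel"
    and "\<And>t. 0 \<le> \<beta> t" and "\<And>t. \<beta> t \<le> M"
  shows "\<exists>T0>0. \<forall>T. 0 < T \<and> T \<le> T0 \<longrightarrow>
           (\<forall>i1 lam1 u1 i2 lam2 u2.
              optimality_system \<gamma> b umax i0 \<beta> T i1 lam1 u1 \<and>
              optimality_system \<gamma> b umax i0 \<beta> T i2 lam2 u2 \<longrightarrow>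
              (\<forall>t\<in>{0..T}. i1 t = i2 t \<and> lam1 t = lam2 t \<and> u1 t = u2 t))"
proof -
  define K where "K = 2*(3*M + \<gamma> + umax) + 4*M + 4/b"
  have M0: "0 \<le> M" using assms(7,8) order_trans by blast
  have K0: "0 < K" unfolding K_def using M0 assms(1,2,3) by (simp add: add_nonneg_pos add_pos_nonneg)
  show ?thesis
  proof (rule exI[of _ "1/(2*K)"], rule conjI)
    show "0 < 1/(2*K)" using K0 by simp
    show "\<forall>T. 0 < T \<and> T \<le> 1/(2*K) \<longrightarrow>
           (\<forall>i1 lam1 u1 i2 lam2 u2.
              optimality_system \<gamma> b umax i0 \<beta> T i1 lam1 u1 \<and>
              optimality_system \<gamma> b umax i0 \<beta> T i2 lam2 u2 \<longrightarrow>
              (\<forall>t\<in>{0..T}. i1 t = i2 t \<and> lam1 t = lam2 t \<and> u1 t = u2 t))"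
    proof (intro allI impI)
      fix T i1 lam1 u1 i2 lam2 u2
      assume T: "0 < T \<and> T \<le> 1/(2*K)"
        and S: "optimality_system \<gamma> b umax i0 \<beta> T i1 lam1 u1 \<and>
              optimality_system \<gamma> b umax i0 \<beta> T i2 lam2 u2"
      have "K * T \<le> K * (1/(2*K))" using T K0 by (intro mult_left_mono) auto
      also have "\<dots> = 1/2" using K0 by simp
      finally have KT: "K*T \<le> 1/2" .
      show "\<forall>t\<in>{0..T}. i1 t = i2 t \<and> lam1 t = lam2 t \<and> u1 t = u2 t"
        by (rule core[OF assms(1,2,3) assms(7,8) conjunct1[OF T] KT[unfolded K_def] conjunct1[OF S] conjunct2[OF S]])
    qed
  qed
qed

end
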